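(* Let $G$ be an odd unicyclic graph on $n$ vertices $1,\ldots,n$ and edges $e_1,\ldots,e_n$ with cycle $C$. For distinct edges $e_i,e_j$ and a vertex $k$: (a) if $e_i,e_j\in C$ and $k\in G\setminus\{e_i,e_j\}[P_{e_i-e_j}]$, then $d(e_i,k)+d(e_j,k)$ and $d(e_i,e_j)$ have the same parity; (b) if $e_i,e_j\in C$ and $k\notin G\setminus\{e_i,e_j\}[P_{e_i-e_j}]$, then $d(e_i,k)+d(e_j,k)$ and $d(e_i,e_j)$ have different parity; (c) if $e_i,e_j\notin C$ and $k\in (G\setminus e_i(C))\cap(G\setminus e_j(C))$, then $d(e_i,k)+d(e_j,k)$ and $d(e_i,e_j)$ have different parity; (d) if $e_i\in C$, $e_j\notin C$ and $k\notin G\setminus e_j[C]$, then $d(e_i,k)+d(e_j,k)$ and $d(e_i,e_j)$ have different parity.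
   Context: A unicyclic graph on $n$ vertices is a simple connected graph with $n$ edges; it is odd if its unique cycle $C$ has odd length. $d$ is graph distance; for vertex $k$ and edge $e=\{l,m\}$, $d(e,k):=\min\{d(k,l),d(k,m)\}$, and for edges $d(e_i,e_j):=\min\{d(l_i,e_j),d(m_i,e_j)\}$ where $e_i=\{l_i,m_i\}$. For an edge $e$ not on $C$, $G\setminus e[C]$ is the component of $G\setminus e$ containing $C$ and $G\setminus e(C)$ the other component. For distinct edges $e_i,e_j$ on $C$, $P_{e_i-e_j}$ is the shortest path between endpoints of $e_i$ and of $e_j$, and $G\setminus\{e_i,e_j\}[P_{e_i-e_j}]$ is the component of $G\setminus\{e_i,e_j\}$ containing $P_{e_i-e_j}$. *)

theory Defs
  imports Main
begin

definition simple_graph :: "'a set \<Rightarrow> 'a set set \<Rightarrow> bool" where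
  "simple_graph V E \<longleftrightarrow> finite V \<and> (\<forall>e\<in>E. e \<subseteq> V \<and> card e = 2)"

text \<open>A walk (vertex list) in the graph (V, E); its length is the number of steps.\<close>
definition walk :: "'a set \<Rightarrow> 'a set set \<Rightarrow> 'a list \<Rightarrow> bool" where
  "walk V E p \<longleftrightarrow> p \<noteq> [] \<and> set p \<subseteq> V \<and>
     (\<forall>i. Suc i < length p \<longrightarrow> {p ! i, p ! Suc i} \<in> E)"

definition reach :: "'a set \<Rightarrow> 'a set set \<Rightarrow> 'a \<Rightarrow> 'a \<Rightarrow> bool" where
  "reach V E u v \<longleftrightarrow> (\<exists>p. walk V E p \<and> hd p = u \<and> last p = v)"

definition connected_graph :: "'a set \<Rightarrow> 'a set set \<Rightarrow> bool" where
  "connected_graph V E \<longleftrightarrow> simple_graph V E \<and> (\<forall>u\<in>V. \<forall>v\<in>V. reach V E u v)"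

definition unicyclic :: "'a set \<Rightarrow> 'a set set \<Rightarrow> bool" where
  "unicyclic V E \<longleftrightarrow> connected_graph V E \<and> card E = card V"

definition cycle_edges :: "'a list \<Rightarrow> 'a set set" where
  "cycle_edges c = {{c ! i, c ! ((Suc i) mod length c)} | i. i < length c}"

definition is_cycle :: "'a set \<Rightarrow> 'a set set \<Rightarrow> 'a set set \<Rightarrow> bool" where
  "is_cycle V E C \<longleftrightarrow> (\<exists>c. distinct c \<and> length c \<ge> 3 \<and> set c \<subseteq> V \<and>
      cycle_edges c \<subseteq> E \<and> C = cycle_edges c)"

definition gdist :: "'a set \<Rightarrow> 'a set set \<Rightarrow> 'a \<Rightarrow> 'a \<Rightarrow> nat" where
  "gdist V E u v = (LEAST n. \<exists>p. walk V E p \<and> hd p = u \<and> last p = v \<and> length p = Suc n)"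

definition edist_v :: "'a set \<Rightarrow> 'a set set \<Rightarrow> 'a set \<Rightarrow> 'a \<Rightarrow> nat" where
  "edist_v V E e k = Min ((\<lambda>x. gdist V E k x) ` e)"

definition edist_e :: "'a set \<Rightarrow> 'a set set \<Rightarrow> 'a set \<Rightarrow> 'a set \<Rightarrow> nat" where
  "edist_e V E ei ej = Min ((\<lambda>x. edist_v V E ej x) ` ei)"

text \<open>G \<setminus> e[C]: vertex set of the component of G - e containing the cycle C.\<close>
definition comp_with_cycle :: "'a set \<Rightarrow> 'a set set \<Rightarrow> 'a set set \<Rightarrow> 'a set \<Rightarrow> 'a set" where
  "comp_with_cycle V E C e = {k \<in> V. \<exists>c \<in> \<Union>C. reach V (E - {e}) c k}"

text \<open>G \<setminus> e(C): the other component of G - e.\<close>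
definition comp_without_cycle :: "'a set \<Rightarrow> 'a set set \<Rightarrow> 'a set set \<Rightarrow> 'a set \<Rightarrow> 'a set" where
  "comp_without_cycle V E C e = V - comp_with_cycle V E C e"

definition shortest_path_between :: "'a set \<Rightarrow> 'a set set \<Rightarrow> 'a set \<Rightarrow> 'a set \<Rightarrow> 'a list \<Rightarrow> bool" where
  "shortest_path_between V E ei ej p \<longleftrightarrow> walk V E p \<and> hd p \<in> ei \<and> last p \<in> ej \<and>
     length p = Suc (edist_e V E ei ej)"

text \<open>G \<setminus> {e_i,e_j}[P_{e_i-e_j}]: vertices of the component of G - {e_i,e_j} containing
  the shortest path P_{e_i-e_j}.\<close>
definition comp_with_path :: "'a set \<Rightarrow> 'a set set \<Rightarrow> 'a set \<Rightarrow> 'a set \<Rightarrow> 'a set" where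
  "comp_with_path V E ei ej = {k \<in> V. \<exists>p. shortest_path_between V E ei ej p \<and>
      (\<exists>x \<in> set p. reach V (E - {ei, ej}) x k)}"

end

theory Submission
  imports Defs
begin

lemma walk_single: "v \<in> V \<Longrightarrow> walk V E [v]"
  by (simp add: walk_def)

lemma walk_Cons_Cons: "walk V E (a # b # p) \<longleftrightarrow> a \<in> V \<and> {a,b} \<in> E \<and> walk V E (b # p)"
proof
  assume w: "walk V E (a # b # p)"
  have "Suc 0 < length (a # b # p)" by simp
  then have e0: "{a,b} \<in> E" using w unfolding walk_def by force
  moreover have "walk V E (b # p)" unfolding walk_def
  proof (intro conjI allI impI)
    show "set (b # p) \<subseteq> V" using w by (auto simp: walk_def)
    fix i assume "Suc i < length (b # p)"
    then have "Suc (Suc i) < length (a # b # p)" by simp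
    then have "{(a#b#p) ! Suc i, (a#b#p) ! Suc (Suc i)} \<in> E" using w unfolding walk_def by blast
    then show "{(b # p) ! i, (b # p) ! Suc i} \<in> E" by simp
  qed simp
  ultimately show "a \<in> V \<and> {a,b} \<in> E \<and> walk V E (b # p)" using w by (auto simp: walk_def)
next
  assume h: "a \<in> V \<and> {a,b} \<in> E \<and> walk V E (b # p)"
  show "walk V E (a # b # p)" unfolding walk_def
  proof (intro conjI allI impI)
    show "set (a # b # p) \<subseteq> V" using h by (auto simp: walk_def)
    fix i assume i: "Suc i < length (a # b # p)"
    show "{(a # b # p) ! i, (a # b # p) ! Suc i} \<in> E"
    proof (cases i)
      case 0 then show ?thesis using h by simp
    next
      case (Suc j)
      then have "Suc j < length (b # p)" using i by simp
      then have "{(b#p) ! j, (b#p) ! Suc j} \<in> E" using h unfolding walk_def by blast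
      then show ?thesis using Suc by simp
    qed
  qed simp
qed

lemma walk_Cons_single: "walk V E [a] \<longleftrightarrow> a \<in> V"
  by (simp add: walk_def)

lemma walk_append:
  assumes "walk V E p" "walk V E q" "last p = hd q"
  shows "walk V E (p @ tl q)"
  using assms
proof (induction p rule: induct_list012)
  case 1 then show ?case by (simp add: walk_def)
next
  case (2 a)
  then show ?case by (cases q) (auto simp: walk_def)
next
  case (3 a b p)
  then have "walk V E ((b # p) @ tl q)" by (simp add: walk_Cons_Cons)
  then show ?case using 3(3) by (simp add: walk_Cons_Cons)
qed

lemma walk_nonempty: "walk V E p \<Longrightarrow> p \<noteq> []" by (simp add: walk_def)

lemma walk_take:
  assumes "walk V E p" "0 < n"
  shows "walk V E (take n p)"
  unfolding walk_def
proof (intro conjI allI impI)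
  show "take n p \<noteq> []" using assms by (simp add: walk_def)
  show "set (take n p) \<subseteq> V" using assms set_take_subset[of n p] by (auto simp: walk_def)
  fix i assume "Suc i < length (take n p)"
  then show "{take n p ! i, take n p ! Suc i} \<in> E" using assms(1) by (simp add: walk_def)
qed

lemma walk_drop:
  assumes "walk V E p" "i < length p"
  shows "walk V E (drop i p)"
  unfolding walk_def
proof (intro conjI allI impI)
  show "drop i p \<noteq> []" using assms by (simp add: walk_def)
  show "set (drop i p) \<subseteq> V" using assms set_drop_subset[of i p] by (auto simp: walk_def)
  fix j assume j: "Suc j < length (drop i p)"
  then have "Suc (i + j) < length p" by simp
  then have "{p ! (i+j), p ! Suc (i+j)} \<in> E" using assms(1) by (simp add: walk_def)
  then show "{drop i p ! j, drop i p ! Suc j} \<in> E" using j by simp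
qed

lemma walk_rev:
  assumes "walk V E p" shows "walk V E (rev p)"
  unfolding walk_def
proof (intro conjI allI impI)
  show "rev p \<noteq> []" "set (rev p) \<subseteq> V" using assms by (auto simp: walk_def)
  fix i assume i: "Suc i < length (rev p)"
  let ?n = "length p"
  have "{p ! (?n - Suc (Suc i)), p ! Suc (?n - Suc (Suc i))} \<in> E"
    using assms i unfolding walk_def by auto
  moreover have "Suc (?n - Suc (Suc i)) = ?n - Suc i" using i by simp
  ultimately show "{rev p ! i, rev p ! Suc i} \<in> E" using i
    by (simp add: rev_nth insert_commute)
qed

lemma walk_mono: "walk V E p \<Longrightarrow> E \<subseteq> E' \<Longrightarrow> walk V E' p"
  by (auto simp: walk_def)

lemma walk_induct_rel:
  assumes "walk V E p"
    and refl: "\<And>a. a \<in> V \<Longrightarrow> R a a"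
    and trans: "\<And>a b c. R a b \<Longrightarrow> R b c \<Longrightarrow> R a c"
    and edge: "\<And>a b. {a,b} \<in> E \<Longrightarrow> a \<in> V \<Longrightarrow> b \<in> V \<Longrightarrow> R a b"
  shows "R (hd p) (last p)"
proof -
  have ne: "p \<noteq> []" and sV: "set p \<subseteq> V" using assms(1) by (auto simp: walk_def)
  have "\<forall>i. i < length p \<longrightarrow> R (hd p) (p ! i)"
  proof (intro allI)
    fix i show "i < length p \<longrightarrow> R (hd p) (p ! i)"
    proof (induction i)
      case 0 show ?case using ne sV by (auto simp: hd_conv_nth intro!: refl)
    next
      case (Suc i)
      show ?case
      proof
        assume s: "Suc i < length p"
        then have "{p!i, p!Suc i} \<in> E" using assms(1) by (auto simp: walk_def)
        moreover have "p!i \<in> V" "p!Suc i \<in> V" using sV s by auto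
        ultimately have "R (p!i) (p!Suc i)" by (rule edge)
        then show "R (hd p) (p ! Suc i)" using Suc s trans by auto
      qed
    qed
  qed
  then show ?thesis using ne by (simp add: last_conv_nth)
qed

lemma reach_refl: "v \<in> V \<Longrightarrow> reach V E v v"
  unfolding reach_def by (rule exI[of _ "[v]"]) (simp add: walk_def)

lemma reach_sym: "reach V E u v \<Longrightarrow> reach V E v u"
  unfolding reach_def using walk_rev by (metis hd_rev last_rev)

lemma reach_trans: "reach V E u v \<Longrightarrow> reach V E v w \<Longrightarrow> reach V E u w"
  unfolding reach_def
proof (elim exE conjE)
  fix p q assume a: "walk V E p" "hd p = u" "last p = v" "walk V E q" "hd q = v" "last q = w"
  have w: "walk V E (p @ tl q)" using a walk_append by metis
  have ne: "p \<noteq> []" "q \<noteq> []" using a by (auto simp: walk_def)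
  have "hd (p @ tl q) = u" using a ne by simp
  moreover have "last (p @ tl q) = w"
  proof (cases "tl q = []")
    case True
    then have "q = [hd q]" using ne by (cases q) auto
    then show ?thesis using True a ne by (metis append_Nil2 last.simps)
  next
    case False
    then show ?thesis using a ne by (simp add: last_tl)
  qed
  ultimately show "\<exists>p. walk V E p \<and> hd p = u \<and> last p = w" using w by blast
qed



lemma reach_mono: "reach V E u v \<Longrightarrow> E \<subseteq> E' \<Longrightarrow> reach V E' u v"
  unfolding reach_def using walk_mono by blast

lemma reach_edge: "{a,b} \<in> E \<Longrightarrow> a \<in> V \<Longrightarrow> b \<in> V \<Longrightarrow> reach V E a b"
  unfolding reach_def
  by (rule exI[of _ "[a,b]"]) (simp add: walk_Cons_Cons walk_Cons_single)

lemma reach_walk: "walk V E p \<Longrightarrow> reach V E (hd p) (last p)"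
  unfolding reach_def by blast

lemma reach_V: "reach V E u v \<Longrightarrow> u \<in> V \<and> v \<in> V"
  unfolding reach_def walk_def by (auto simp: hd_conv_nth last_conv_nth)

lemma gdist_le: "walk V E p \<Longrightarrow> gdist V E (hd p) (last p) \<le> length p - 1"
  unfolding gdist_def
  by (rule Least_le) (auto simp: walk_def)

lemma gdist_ex:
  assumes "reach V E u v"
  shows "\<exists>p. walk V E p \<and> hd p = u \<and> last p = v \<and> length p = Suc (gdist V E u v)"
proof -
  obtain p where p: "walk V E p" "hd p = u" "last p = v" using assms unfolding reach_def by blast
  then have "length p = Suc (length p - 1)" by (cases p) (auto simp: walk_def)
  then have "\<exists>n p. walk V E p \<and> hd p = u \<and> last p = v \<and> length p = Suc n" using p by blast
  then show ?thesis unfolding gdist_def by (rule LeastI_ex)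
qed

locale cg =
  fixes V :: "'a set" and E :: "'a set set"
  assumes cg: "connected_graph V E"
begin

lemma sg: "simple_graph V E" using cg by (simp add: connected_graph_def)
lemma finV: "finite V" using sg by (simp add: simple_graph_def)
lemma finE: "finite E"
proof -
  have "E \<subseteq> Pow V" using sg by (auto simp: simple_graph_def)
  then show ?thesis using finV by (meson finite_Pow_iff finite_subset)
qed
lemma edge_sub: "e \<in> E \<Longrightarrow> e \<subseteq> V" using sg by (simp add: simple_graph_def)
lemma edge_card: "e \<in> E \<Longrightarrow> card e = 2" using sg by (simp add: simple_graph_def)
lemma edge_fin: "e \<in> E \<Longrightarrow> finite e" using edge_card[of e] card.infinite[of e] by auto
lemma edge_ne: "e \<in> E \<Longrightarrow> e \<noteq> {}" using edge_card by fastforce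
lemma edge_ab: "{a,b} \<in> E \<Longrightarrow> a \<noteq> b \<and> a \<in> V \<and> b \<in> V"
proof -
  assume h: "{a,b} \<in> E"
  have "a \<noteq> b"
  proof
    assume "a = b" then have "card {a,b} = 1" by simp
    then show False using edge_card[OF h] by simp
  qed
  then show ?thesis using edge_sub[OF h] by blast
qed
lemma edge_obtain: "e \<in> E \<Longrightarrow> \<exists>a b. e = {a,b} \<and> a \<noteq> b"
  using edge_card[of e] card_2_iff[of e] by blast

lemma reach_all: "u \<in> V \<Longrightarrow> v \<in> V \<Longrightarrow> reach V E u v"
  using cg unfolding connected_graph_def by blast

lemma gdist_ex': "u \<in> V \<Longrightarrow> v \<in> V \<Longrightarrow>
   \<exists>p. walk V E p \<and> hd p = u \<and> last p = v \<and> length p = Suc (gdist V E u v)"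
  by (rule gdist_ex, rule reach_all)

lemma gdist_self: "u \<in> V \<Longrightarrow> gdist V E u u = 0"
  using gdist_le[of V E "[u]"] by (simp add: walk_def)

lemma gdist_sym: assumes "u \<in> V" "v \<in> V" shows "gdist V E u v = gdist V E v u"
proof -
  have *: "gdist V E x y \<le> gdist V E y x" if xy: "x \<in> V" "y \<in> V" for x y
  proof -
    obtain p where p: "walk V E p" "hd p = y" "last p = x" "length p = Suc (gdist V E y x)"
      using gdist_ex'[OF xy(2,1)] by blast
    have "gdist V E (hd (rev p)) (last (rev p)) \<le> length (rev p) - 1"
      using gdist_le walk_rev p(1) by blast
    then show ?thesis using p walk_nonempty by (simp add: hd_rev last_rev)
  qed
  show ?thesis using *[OF assms] *[OF assms(2,1)] by simp
qed

lemma gdist_tri: assumes "u \<in> V" "v \<in> V" "w \<in> V"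
  shows "gdist V E u w \<le> gdist V E u v + gdist V E v w"
proof -
  obtain p where p: "walk V E p" "hd p = u" "last p = v" "length p = Suc (gdist V E u v)"
    using gdist_ex' assms by blast
  obtain q where q: "walk V E q" "hd q = v" "last q = w" "length q = Suc (gdist V E v w)"
    using gdist_ex' assms by blast
  have w: "walk V E (p @ tl q)" using walk_append p q by metis
  have ne: "p \<noteq> []" "q \<noteq> []" using p q by (auto simp: walk_def)
  have "last (p @ tl q) = w"
  proof (cases "tl q = []")
    case True
    then have "q = [hd q]" using ne by (cases q) auto
    then show ?thesis using True p q ne by (metis append_Nil2 last.simps)
  next
    case False
    then show ?thesis using q ne by (simp add: last_tl)
  qed
  moreover have "hd (p @ tl q) = u" using p ne by simp
  ultimately have "gdist V E u w \<le> length (p @ tl q) - 1" using gdist_le[OF w] by simp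
  then show ?thesis using p q by simp
qed

lemma gdist_edge: "{a,b} \<in> E \<Longrightarrow> gdist V E a b \<le> 1"
  using gdist_le[of V E "[a,b]"] edge_ab[of a b] by (simp add: walk_Cons_Cons walk_Cons_single)

lemma gdist_adj: assumes "{a,b} \<in> E" "u \<in> V" shows "gdist V E u b \<le> gdist V E u a + 1"
  using gdist_tri[of u a b] gdist_edge[OF assms(1)] edge_ab[OF assms(1)] assms(2) by linarith

lemma edist_v_le: "e \<in> E \<Longrightarrow> x \<in> e \<Longrightarrow> edist_v V E e k \<le> gdist V E k x"
  unfolding edist_v_def using edge_fin by (simp add: Min_le)

lemma edist_v_ex: "e \<in> E \<Longrightarrow> \<exists>x\<in>e. edist_v V E e k = gdist V E k x"
proof -
  assume e: "e \<in> E"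
  have "Min ((\<lambda>x. gdist V E k x) ` e) \<in> (\<lambda>x. gdist V E k x) ` e"
    using e edge_fin edge_ne by (intro Min_in) auto
  then show ?thesis unfolding edist_v_def by auto
qed

lemma edist_e_le: "ei \<in> E \<Longrightarrow> x \<in> ei \<Longrightarrow> edist_e V E ei ej \<le> edist_v V E ej x"
  unfolding edist_e_def using edge_fin by (simp add: Min_le)

lemma edist_e_ex: "ei \<in> E \<Longrightarrow> \<exists>x\<in>ei. edist_e V E ei ej = edist_v V E ej x"
proof -
  assume e: "ei \<in> E"
  have "Min ((\<lambda>x. edist_v V E ej x) ` ei) \<in> (\<lambda>x. edist_v V E ej x) ` ei"
    using e edge_fin edge_ne by (intro Min_in) auto
  then show ?thesis unfolding edist_e_def by auto
qed

lemma edist_v_zero: "e \<in> E \<Longrightarrow> x \<in> e \<Longrightarrow> edist_v V E e x = 0"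
proof -
  assume a: "e \<in> E" "x \<in> e"
  then have "x \<in> V" using edge_sub by blast
  then show ?thesis using edist_v_le[OF a, of x] gdist_self[of x] by simp
qed

end


context cg begin

lemma A_closed:
  assumes "a \<in> comp_with_cycle V E C e" "{a,b} \<in> E" "{a,b} \<noteq> e"
  shows "b \<in> comp_with_cycle V E C e"
proof -
  obtain c where c: "c \<in> \<Union>C" "reach V (E - {e}) c a" using assms(1) unfolding comp_with_cycle_def by blast
  have ab: "a \<in> V" "b \<in> V" using edge_ab[OF assms(2)] by auto
  have "reach V (E - {e}) a b" using assms(2,3) ab by (intro reach_edge) auto
  then have "reach V (E - {e}) c b" using c(2) reach_trans by metis
  then show ?thesis using c(1) ab unfolding comp_with_cycle_def by blast
qed

lemma crossing:
  assumes w: "walk V E p" and h: "hd p \<in> comp_with_cycle V E C e" and l: "last p \<notin> comp_with_cycle V E C e"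
  shows "\<exists>i. Suc i < length p \<and> p!i \<in> comp_with_cycle V E C e \<and> p!Suc i \<notin> comp_with_cycle V E C e
     \<and> {p!i, p!Suc i} = e"
proof -
  let ?A = "comp_with_cycle V E C e"
  have ne: "p \<noteq> []" using w by (simp add: walk_def)
  have "\<exists>i. Suc i < length p \<and> p!i \<in> ?A \<and> p!Suc i \<notin> ?A"
  proof (rule ccontr)
    assume "\<not> ?thesis"
    then have st: "\<And>i. Suc i < length p \<Longrightarrow> p!i \<in> ?A \<Longrightarrow> p!Suc i \<in> ?A" by blast
    have "\<forall>i. i < length p \<longrightarrow> p!i \<in> ?A"
    proof
      fix i show "i < length p \<longrightarrow> p!i \<in> ?A"
        by (induction i) (use h ne st in \<open>auto simp: hd_conv_nth\<close>)
    qed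
    then have "last p \<in> ?A" using ne by (simp add: last_conv_nth)
    then show False using l by simp
  qed
  then obtain i where i: "Suc i < length p" "p!i \<in> ?A" "p!Suc i \<notin> ?A" by blast
  have "{p!i, p!Suc i} \<in> E" using w i(1) by (simp add: walk_def)
  then have "{p!i, p!Suc i} = e" using A_closed i(2,3) by blast
  then show ?thesis using i by blast
qed

lemma bridge:
  assumes CV: "\<Union>C \<subseteq> V" "\<Union>C \<noteq> {}" and e: "e \<in> E" and k: "k \<in> V" "k \<notin> comp_with_cycle V E C e"
  shows "\<exists>u w. e = {u,w} \<and> u \<in> comp_with_cycle V E C e \<and> w \<notin> comp_with_cycle V E C e \<and> u \<in> V \<and> w \<in> V"
proof -
  obtain c where c: "c \<in> \<Union>C" using CV by blast
  then have cV: "c \<in> V" using CV by blast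
  then have cA: "c \<in> comp_with_cycle V E C e" using c reach_refl unfolding comp_with_cycle_def by fastforce
  obtain p where p: "walk V E p" "hd p = c" "last p = k" using reach_all[OF cV k(1)] unfolding reach_def by blast
  obtain i where i: "Suc i < length p" "p!i \<in> comp_with_cycle V E C e" "p!Suc i \<notin> comp_with_cycle V E C e"
     "{p!i, p!Suc i} = e" using crossing[OF p(1)] p cA k by metis
  then show ?thesis using edge_sub[OF e] by blast
qed

lemma bridge_dist:
  assumes e: "e \<in> E" "e = {u,w}" and u: "u \<in> comp_with_cycle V E C e" and w: "w \<notin> comp_with_cycle V E C e"
    and k: "k \<in> V" "k \<notin> comp_with_cycle V E C e" and v: "v \<in> comp_with_cycle V E C e"
  shows "gdist V E k v = gdist V E k w + 1 + gdist V E u v"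
proof -
  have uV: "u \<in> V" "w \<in> V" using edge_ab e by blast+
  have vV: "v \<in> V" using v unfolding comp_with_cycle_def by blast
  have "gdist V E u v + 1 + gdist V E w k \<le> gdist V E v k"
  proof -
    obtain p where p: "walk V E p" "hd p = v" "last p = k" "length p = Suc (gdist V E v k)"
      using gdist_ex'[OF vV k(1)] by blast
    obtain i where i: "Suc i < length p" "p!i \<in> comp_with_cycle V E C e" "p!Suc i \<notin> comp_with_cycle V E C e"
     "{p!i, p!Suc i} = e" using crossing[OF p(1)] p v k by metis
    have piu: "p!i = u" "p!Suc i = w" using i(2,3,4) e(2) u w by (auto simp: doubleton_eq_iff)
    have w1: "walk V E (take (Suc i) p)" using walk_take p(1) by blast
    have "hd (take (Suc i) p) = v" using p walk_nonempty by (metis hd_take zero_less_Suc)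
    moreover have "last (take (Suc i) p) = u" using i(1) piu by (simp add: take_Suc_conv_app_nth)
    ultimately have g1: "gdist V E v u \<le> i" using gdist_le[OF w1] i(1) by simp
    have w2: "walk V E (drop (Suc i) p)" using walk_drop p(1) i(1) by blast
    have "hd (drop (Suc i) p) = w" using i(1) piu by (simp add: hd_drop_conv_nth)
    moreover have "last (drop (Suc i) p) = k" using i(1) p by simp
    ultimately have g2: "gdist V E w k \<le> length p - Suc i - 1" using gdist_le[OF w2] by simp
    show ?thesis using g1 g2 i(1) p(4) gdist_sym[OF vV uV(1)] by linarith
  qed
  moreover have "gdist V E k v \<le> gdist V E k w + 1 + gdist V E u v"
  proof -
    have "gdist V E k v \<le> gdist V E k w + gdist V E w v" using gdist_tri k(1) uV vV by blast
    moreover have "gdist V E w v \<le> gdist V E w u + gdist V E u v" using gdist_tri k(1) uV vV by blast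
    moreover have "gdist V E w u \<le> 1" using gdist_edge[of w u] e by (simp add: insert_commute)
    ultimately show ?thesis by linarith
  qed
  ultimately show ?thesis using gdist_sym[OF vV k(1)] gdist_sym[OF uV(2) k(1)] by linarith
qed

lemma edist_e_le_sym: assumes "ei \<in> E" "ej \<in> E" shows "edist_e V E ei ej \<le> edist_e V E ej ei"
proof -
  obtain y where y: "y \<in> ej" "edist_e V E ej ei = edist_v V E ei y" using edist_e_ex[OF assms(2)] by blast
  obtain x where x: "x \<in> ei" "edist_v V E ei y = gdist V E y x" using edist_v_ex[OF assms(1)] by blast
  have "edist_e V E ei ej \<le> edist_v V E ej x" using edist_e_le[OF assms(1) x(1)] .
  also have "\<dots> \<le> gdist V E x y" using edist_v_le[OF assms(2) y(1)] .
  also have "\<dots> = gdist V E y x" using gdist_sym edge_sub assms x y by blast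
  finally show ?thesis using x y by simp
qed

lemma edist_e_sym: "ei \<in> E \<Longrightarrow> ej \<in> E \<Longrightarrow> edist_e V E ei ej = edist_e V E ej ei"
  using edist_e_le_sym le_antisym by blast

lemma lemmaX:
  assumes CV: "\<Union>C \<subseteq> V" "\<Union>C \<noteq> {}" and ei: "ei \<in> E" and ej: "ej \<in> E"
    and k: "k \<in> V" "k \<notin> comp_with_cycle V E C ej" and sub: "ei \<subseteq> comp_with_cycle V E C ej"
  shows "(edist_v V E ei k + edist_v V E ej k) mod 2 \<noteq> edist_e V E ei ej mod 2"
proof -
  let ?A = "comp_with_cycle V E C ej"
  obtain u w where uw: "ej = {u,w}" "u \<in> ?A" "w \<notin> ?A" "u \<in> V" "w \<in> V"
    using bridge[OF CV ej k] by blast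
  have D: "\<And>k' v. k' \<in> V \<Longrightarrow> k' \<notin> ?A \<Longrightarrow> v \<in> ?A \<Longrightarrow> gdist V E k' v = gdist V E k' w + 1 + gdist V E u v"
    using bridge_dist[OF ej uw(1,2,3)] by blast
  have eiV: "ei \<subseteq> V" using edge_sub[OF ei] .
  have h1: "edist_v V E ej k = gdist V E k w"
  proof -
    have "edist_v V E ej k \<le> gdist V E k w" using edist_v_le[OF ej] uw(1) by simp
    moreover obtain x where x: "x \<in> ej" "edist_v V E ej k = gdist V E k x" using edist_v_ex[OF ej] by blast
    moreover have "gdist V E k u = gdist V E k w + 1" using D[OF k uw(2)] gdist_self[OF uw(4)] by simp
    ultimately show ?thesis using uw(1) by auto
  qed
  have h2: "edist_v V E ei k = gdist V E k w + 1 + edist_v V E ei u"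
  proof -
    obtain x0 where x0: "x0 \<in> ei" "edist_v V E ei k = gdist V E k x0" using edist_v_ex[OF ei] by blast
    obtain x1 where x1: "x1 \<in> ei" "edist_v V E ei u = gdist V E u x1" using edist_v_ex[OF ei] by blast
    have "edist_v V E ei k = gdist V E k w + 1 + gdist V E u x0" using x0 D[OF k] sub by auto
    moreover have "edist_v V E ei u \<le> gdist V E u x0" using edist_v_le[OF ei x0(1)] .
    moreover have "edist_v V E ei k \<le> gdist V E k x1" using edist_v_le[OF ei x1(1)] .
    moreover have "gdist V E k x1 = gdist V E k w + 1 + gdist V E u x1" using x1 D[OF k] sub by auto
    ultimately show ?thesis using x1(2) by linarith
  qed
  have h3: "edist_e V E ei ej = edist_v V E ei u"
  proof -
    have "\<And>x. x \<in> ei \<Longrightarrow> edist_v V E ej x = gdist V E u x"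
    proof -
      fix x assume x: "x \<in> ei"
      have xV: "x \<in> V" using x eiV by blast
      have "gdist V E w x = 1 + gdist V E u x" using D[OF uw(5,3)] x sub gdist_self[OF uw(5)] by auto
      then have gw: "gdist V E x w = 1 + gdist V E u x" using gdist_sym[OF xV uw(5)] by simp
      have gu: "gdist V E x u = gdist V E u x" using gdist_sym[OF xV uw(4)] .
      have "edist_v V E ej x \<le> gdist V E x u" using edist_v_le[OF ej] uw(1) by simp
      moreover obtain y where "y \<in> ej" "edist_v V E ej x = gdist V E x y" using edist_v_ex[OF ej] by blast
      ultimately show "edist_v V E ej x = gdist V E u x" using uw(1) gw gu by auto
    qed
    then have "(\<lambda>x. edist_v V E ej x) ` ei = (\<lambda>x. gdist V E u x) ` ei" by (rule image_cong[OF refl])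
    then show ?thesis unfolding edist_e_def edist_v_def by simp
  qed
  show ?thesis using h1 h2 h3 by presburger
qed

lemma partD:
  assumes CV: "\<Union>C \<subseteq> V" "\<Union>C \<noteq> {}" and ei: "ei \<in> C" "ei \<in> E" and ej: "ej \<in> E"
    and k: "k \<in> V" "k \<notin> comp_with_cycle V E C ej"
  shows "(edist_v V E ei k + edist_v V E ej k) mod 2 \<noteq> edist_e V E ei ej mod 2"
proof (rule lemmaX[OF CV ei(2) ej k])
  show "ei \<subseteq> comp_with_cycle V E C ej"
  proof
    fix x assume "x \<in> ei"
    then have "x \<in> \<Union>C" "x \<in> V" using ei CV by auto
    then show "x \<in> comp_with_cycle V E C ej" unfolding comp_with_cycle_def using reach_refl by fastforce
  qed
qed

lemma partC:
  assumes CV: "\<Union>C \<subseteq> V" "\<Union>C \<noteq> {}" and ei: "ei \<in> E" and ej: "ej \<in> E" and ne: "ei \<noteq> ej"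
    and k: "k \<in> V" "k \<notin> comp_with_cycle V E C ei" "k \<notin> comp_with_cycle V E C ej"
  shows "(edist_v V E ei k + edist_v V E ej k) mod 2 \<noteq> edist_e V E ei ej mod 2"
proof -
  let ?Ai = "comp_with_cycle V E C ei" and ?Aj = "comp_with_cycle V E C ej"
  consider "ei \<subseteq> ?Aj" | "ej \<subseteq> ?Ai" | "\<not> ei \<subseteq> ?Aj \<and> \<not> ej \<subseteq> ?Ai" by blast
  then show ?thesis
  proof cases
    case 1 then show ?thesis using lemmaX[OF CV ei ej k(1,3)] by blast
  next
    case 2
    have "(edist_v V E ej k + edist_v V E ei k) mod 2 \<noteq> edist_e V E ej ei mod 2"
      using lemmaX[OF CV ej ei k(1,2) 2] .
    then show ?thesis using edist_e_sym[OF ei ej] by (simp add: add.commute)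
  next
    case 3
    have disj: "\<And>f g. f \<in> E \<Longrightarrow> g \<in> E \<Longrightarrow> f \<noteq> g \<Longrightarrow> \<not> f \<subseteq> comp_with_cycle V E C g \<Longrightarrow>
        f \<inter> comp_with_cycle V E C g = {}"
    proof -
      fix f g assume fg: "f \<in> E" "g \<in> E" "f \<noteq> g" "\<not> f \<subseteq> comp_with_cycle V E C g"
      obtain a b where ab: "f = {a,b}" using edge_obtain[OF fg(1)] by blast
      show "f \<inter> comp_with_cycle V E C g = {}"
      proof (rule ccontr)
        assume "f \<inter> comp_with_cycle V E C g \<noteq> {}"
        then have "a \<in> comp_with_cycle V E C g \<or> b \<in> comp_with_cycle V E C g" using ab by blast
        then have "a \<in> comp_with_cycle V E C g \<and> b \<in> comp_with_cycle V E C g"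
          using A_closed[of a C g b] A_closed[of b C g a] fg ab by (auto simp: insert_commute)
        then show False using fg(4) ab by blast
      qed
    qed
    have d1: "ei \<inter> ?Aj = {}" using disj[OF ei ej ne] 3 by blast
    have d2: "ej \<inter> ?Ai = {}" using disj[OF ej ei ne[symmetric]] 3 by blast
    obtain u w where uw: "ej = {u,w}" "u \<in> ?Aj" using bridge[OF CV ej k(1,3)] by blast
    obtain c where c: "c \<in> \<Union>C" "reach V (E - {ej}) c u" using uw(2) unfolding comp_with_cycle_def by blast
    obtain q where q: "walk V (E - {ej}) q" "hd q = c" "last q = u" using c(2) unfolding reach_def by blast
    have cV: "c \<in> V" using c CV by blast
    have cAi: "c \<in> ?Ai" using c cV reach_refl unfolding comp_with_cycle_def by fastforce
    have uAi: "u \<notin> ?Ai" using d2 uw(1) by blast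
    have qE: "walk V E q" using walk_mono q(1) by blast
    obtain i where i: "Suc i < length q" "{q!i, q!Suc i} = ei" using crossing[OF qE] q cAi uAi by metis
    have w1: "walk V (E - {ej}) (take (Suc i) q)" using walk_take q(1) by blast
    have "hd (take (Suc i) q) = c" using q walk_nonempty by (metis hd_take zero_less_Suc)
    moreover have "last (take (Suc i) q) = q!i" using i(1) by (simp add: take_Suc_conv_app_nth)
    ultimately have "reach V (E - {ej}) c (q!i)" using w1 unfolding reach_def by blast
    moreover have "q!i \<in> V" using i(2) edge_sub[OF ei] by blast
    ultimately have "q!i \<in> ?Aj" using c(1) unfolding comp_with_cycle_def by blast
    moreover have "q!i \<in> ei" using i(2) by blast
    ultimately show ?thesis using d1 by blast
  qed
qed

end


lemma ce_image: "cycle_edges c = (\<lambda>i. {c!i, c!(Suc i mod length c)}) ` {..<length c}"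
  unfolding cycle_edges_def by auto

lemma ce_inj:
  assumes d: "distinct c" "length c \<ge> 3" and ij: "i < length c" "j < length c"
    and eq: "{c!i, c!(Suc i mod length c)} = {c!j, c!(Suc j mod length c)}"
  shows "i = j"
proof (rule ccontr)
  assume ne: "i \<noteq> j"
  let ?m = "length c"
  have m0: "0 < ?m" using ij(1) by linarith
  have si: "Suc i mod ?m < ?m" "Suc j mod ?m < ?m" using m0 by simp_all
  have "c!i \<noteq> c!j" using d(1) ij ne by (simp add: nth_eq_iff_index_eq)
  then have "c!i = c!(Suc j mod ?m) \<and> c!(Suc i mod ?m) = c!j" using eq by (auto simp: doubleton_eq_iff)
  then have a: "i = Suc j mod ?m" "Suc i mod ?m = j" using d(1) ij si by (auto simp: nth_eq_iff_index_eq)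
  show False
  proof (cases "Suc j < ?m")
    case True
    then have "i = Suc j" using a by simp
    show False
    proof (cases "Suc i < ?m")
      case True
      then have "Suc i = j" using a(2) by simp
      then show False using \<open>i = Suc j\<close> by simp
    next
      case False
      then have "Suc i = ?m" using ij by simp
      then have "j = 0" using a(2) by simp
      then show False using \<open>i = Suc j\<close> \<open>Suc i = ?m\<close> d(2) by simp
    qed
  next
    case False
    then have "Suc j = ?m" using ij by simp
    then have "i = 0" using a by simp
    then have "j = Suc 0" using a d(2) by simp
    then show False using \<open>Suc j = ?m\<close> d(2) by simp
  qed
qed

lemma card_ce: assumes "distinct c" "length c \<ge> 3" shows "card (cycle_edges c) = length c"
proof -
  have "inj_on (\<lambda>i. {c!i, c!(Suc i mod length c)}) {..<length c}"
    using ce_inj[OF assms] by (auto simp: inj_on_def)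
  then show ?thesis unfolding ce_image by (simp add: card_image)
qed

lemma ce_rotate:
  assumes d: "distinct c" "length c \<ge> 3"
  shows "cycle_edges (rotate n c) = cycle_edges c"
proof -
  let ?m = "length c"
  have sub: "cycle_edges (rotate n c) \<subseteq> cycle_edges c"
  proof
    fix x assume "x \<in> cycle_edges (rotate n c)"
    then obtain t where t: "t < ?m" "x = {rotate n c ! t, rotate n c ! (Suc t mod ?m)}"
      unfolding cycle_edges_def by auto
    have m0: "?m > 0" using d(2) by linarith
    have "rotate n c ! t = c ! ((t + n) mod ?m)" using nth_rotate[OF t(1), of n] by (simp add: add.commute)
    moreover have "rotate n c ! (Suc t mod ?m) = c ! ((Suc t mod ?m + n) mod ?m)"
      using nth_rotate[of "Suc t mod ?m" c n] m0 by (simp add: add.commute)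
    moreover have "(Suc t mod ?m + n) mod ?m = Suc ((t + n) mod ?m) mod ?m"
      by (simp add: mod_add_left_eq mod_Suc_eq)
    ultimately have "x = {c ! ((t + n) mod ?m), c ! (Suc ((t + n) mod ?m) mod ?m)}" using t by simp
    moreover have "(t + n) mod ?m < ?m" using m0 by simp
    ultimately show "x \<in> cycle_edges c" unfolding cycle_edges_def by blast
  qed
  have "card (cycle_edges (rotate n c)) = card (cycle_edges c)"
    using card_ce[OF d] card_ce[of "rotate n c"] d by simp
  moreover have "finite (cycle_edges c)" unfolding ce_image by simp
  ultimately show ?thesis using sub card_subset_eq by blast
qed

lemma cycle_rotate:
  assumes d: "distinct c" "length c \<ge> 3" and e: "e \<in> cycle_edges c"
  shows "\<exists>c'. distinct c' \<and> length c' = length c \<and> set c' = set c \<and> cycle_edges c' = cycle_edges c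
     \<and> e = {c'!(length c - 1), c'!0}"
proof -
  let ?m = "length c"
  obtain i where i: "i < ?m" "e = {c!i, c!(Suc i mod ?m)}" using e unfolding cycle_edges_def by auto
  let ?c = "rotate (Suc i) c"
  have m0: "?m > 0" using d(2) by linarith
  have "?c ! (?m - 1) = c ! ((?m - 1 + Suc i) mod ?m)" using m0 nth_rotate[of "?m - 1" c "Suc i"]
    by (simp only: add.commute)
  moreover have "(?m - 1 + Suc i) mod ?m = i" using i m0
    by (metis Suc_pred' add_Suc_shift add.commute mod_add_self2 mod_less)
  moreover have "?c ! 0 = c ! (Suc i mod ?m)" using m0 nth_rotate[of 0 c "Suc i"] by simp
  ultimately have "e = {?c!(?m - 1), ?c!0}" using i by (simp add: insert_commute)
  moreover have "cycle_edges ?c = cycle_edges c" using ce_rotate[OF d] .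
  moreover have "distinct ?c" "length ?c = ?m" "set ?c = set c" using d by simp_all
  ultimately show ?thesis by blast
qed

lemma last_edge_ne:
  assumes d: "distinct c" "length c \<ge> 3" and l: "Suc l < length c"
  shows "{c!l, c!Suc l} \<in> cycle_edges c" "{c!l, c!Suc l} \<noteq> {c!(length c - 1), c!0}"
proof -
  have sl: "Suc l mod length c = Suc l" using l by simp
  have l1: "l < length c" using l by simp
  have "{c!l, c!(Suc l mod length c)} \<in> cycle_edges c" using l1 unfolding cycle_edges_def by blast
  then show "{c!l, c!Suc l} \<in> cycle_edges c" using sl by simp
  have "Suc (length c - 1) = length c" using d(2) by linarith
  then have eq: "Suc (length c - 1) mod length c = 0" by simp
  show "{c!l, c!Suc l} \<noteq> {c!(length c - 1), c!0}"
  proof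
    assume "{c!l, c!Suc l} = {c!(length c - 1), c!0}"
    then have "{c!l, c!(Suc l mod length c)} = {c!(length c - 1), c!(Suc (length c - 1) mod length c)}"
      using l eq by simp
    moreover have "l < length c" "length c - 1 < length c" using l by simp_all
    ultimately have "l = length c - 1" using ce_inj[OF d] by blast
    then show False using l by simp
  qed
qed

lemma walk_col:
  assumes w: "walk V E p" and bi: "\<And>a b. {a,b} \<in> E \<Longrightarrow> col a \<noteq> (col b :: bool)"
  shows "i < length p \<Longrightarrow> (col (p!i) = col (p!0)) = even i"
proof (induction i)
  case 0 then show ?case by simp
next
  case (Suc i)
  then have "{p!i, p!Suc i} \<in> E" using w by (simp add: walk_def)
  then have "col (p!i) \<noteq> col (p!Suc i)" using bi by blast
  then show ?case using Suc by auto
qed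

context cg begin

lemma bfs_col:
  assumes card: "card E + 1 = card V"
  shows "\<exists>col. \<forall>a b. {a,b} \<in> E \<longrightarrow> col a \<noteq> (col b :: bool)"
proof -
  have "V \<noteq> {}" using card by auto
  then obtain r where r: "r \<in> V" by blast
  define g where "g = gdist V E r"
  have par_ex: "\<exists>u. {u,v} \<in> E \<and> g u + 1 = g v" if v: "v \<in> V" "v \<noteq> r" for v
  proof -
    obtain p where p: "walk V E p" "hd p = r" "last p = v" "length p = Suc (g v)"
      using gdist_ex'[OF r v(1)] unfolding g_def by blast
    have ne: "p \<noteq> []" using p by (simp add: walk_def)
    have "g v \<noteq> 0"
    proof
      assume "g v = 0"
      then have "length p = 1" using p by simp
      then have "hd p = last p" using ne by (cases p) auto
      then show False using p v by simp
    qed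
    then obtain n where n: "g v = Suc n" by (cases "g v") auto
    let ?u = "p ! n"
    have l: "length p = Suc (Suc n)" using p n by simp
    have "{p!n, p!Suc n} \<in> E" using p(1) l by (simp add: walk_def)
    moreover have "p!Suc n = v" using p(3) l ne by (simp add: last_conv_nth)
    ultimately have e: "{?u, v} \<in> E" by simp
    have w1: "walk V E (take (Suc n) p)" using walk_take p(1) by blast
    have "hd (take (Suc n) p) = r" using p ne by (metis hd_take zero_less_Suc)
    moreover have "last (take (Suc n) p) = ?u" using l by (simp add: take_Suc_conv_app_nth)
    ultimately have "g ?u \<le> n" using gdist_le[OF w1] l unfolding g_def by simp
    moreover have "g v \<le> g ?u + 1" using gdist_adj[OF e r] unfolding g_def .
    ultimately show ?thesis using e n by (intro exI[of _ ?u]) simp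
  qed
  define par where "par v = (SOME u. {u,v} \<in> E \<and> g u + 1 = g v)" for v
  have par: "{par v, v} \<in> E \<and> g (par v) + 1 = g v" if "v \<in> V - {r}" for v
  proof -
    from that have "v \<in> V" "v \<noteq> r" by auto
    then have "\<exists>u. {u,v} \<in> E \<and> g u + 1 = g v" by (rule par_ex)
    then show ?thesis unfolding par_def by (rule someI_ex)
  qed
  define f where "f v = {par v, v}" for v
  have inj: "inj_on f (V - {r})"
  proof (rule inj_onI)
    fix v v' assume vv: "v \<in> V - {r}" "v' \<in> V - {r}" "f v = f v'"
    show "v = v'"
    proof (rule ccontr)
      assume "v \<noteq> v'"
      then have "par v = v' \<and> par v' = v" using vv(3) unfolding f_def by (auto simp: doubleton_eq_iff)
      then show False using par[OF vv(1)] par[OF vv(2)] by simp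
    qed
  qed
  have sub: "f ` (V - {r}) \<subseteq> E" using par unfolding f_def by blast
  have "card (f ` (V - {r})) = card E" using card_image[OF inj] card r finV by simp
  then have fE: "f ` (V - {r}) = E" using sub finE card_subset_eq by blast
  have "\<forall>a b. {a,b} \<in> E \<longrightarrow> even (g a) \<noteq> even (g b)"
  proof (intro allI impI)
    fix a b assume "{a,b} \<in> E"
    then obtain v where v: "v \<in> V - {r}" "{a,b} = {par v, v}" using fE unfolding f_def by blast
    have "g (par v) + 1 = g v" using par[OF v(1)] by simp
    then have "even (g v) \<noteq> even (g (par v))" by (metis even_Suc Suc_eq_plus1)
    then show "even (g a) \<noteq> even (g b)" using v(2) by (auto simp: doubleton_eq_iff)
  qed
  then show ?thesis by (intro exI[of _ "\<lambda>x. even (g x)"])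
qed

end



context cg begin

lemma key:
  assumes uni: "card E = card V" and d: "distinct c" "length c \<ge> 3" "set c \<subseteq> V" "cycle_edges c \<subseteq> E"
    and od: "odd (length c)" and e: "e \<in> cycle_edges c"
    and ab: "{a,b} \<in> E" "{a,b} \<noteq> e"
  shows "odd (edist_v V E e a + edist_v V E e b)"
proof -
  let ?m = "length c"
  obtain c' where c': "distinct c'" "length c' = ?m" "set c' = set c" "cycle_edges c' = cycle_edges c"
     "e = {c'!(?m - 1), c'!0}" using cycle_rotate[OF d(1,2) e] by blast
  have d': "distinct c'" "length c' \<ge> 3" using c' d by auto
  have eE: "e \<in> E" using e d(4) by blast
  let ?T = "E - {e}"
  have walkc: "walk V ?T c'" unfolding walk_def
  proof (intro conjI allI impI)
    show "c' \<noteq> []" using d'(2) by auto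
    show "set c' \<subseteq> V" using c'(3) d(3) by simp
    fix l assume l: "Suc l < length c'"
    show "{c'!l, c'!Suc l} \<in> ?T" using last_edge_ne[OF d' l] c'(2,4,5) d(4) by auto
  qed
  have hdc: "hd c' = c'!0" using walkc by (simp add: walk_def hd_conv_nth)
  have lastc: "last c' = c'!(?m - 1)" using walkc c'(2) by (simp add: walk_def last_conv_nth)
  have r0: "reach V ?T (c'!0) (c'!(?m - 1))" using reach_walk[OF walkc] hdc lastc by simp
  have connT: "connected_graph V ?T"
    unfolding connected_graph_def
  proof (intro conjI ballI)
    show "simple_graph V ?T" using sg unfolding simple_graph_def by blast
    fix u v assume uv: "u \<in> V" "v \<in> V"
    obtain p where p: "walk V E p" "hd p = u" "last p = v" using reach_all[OF uv] unfolding reach_def by blast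
    have "reach V ?T (hd p) (last p)"
    proof (rule walk_induct_rel[OF p(1)])
      show "\<And>a. a \<in> V \<Longrightarrow> reach V ?T a a" by (rule reach_refl)
      show "\<And>a b c. reach V ?T a b \<Longrightarrow> reach V ?T b c \<Longrightarrow> reach V ?T a c" by (rule reach_trans)
      fix x y assume xy: "{x,y} \<in> E" "x \<in> V" "y \<in> V"
      show "reach V ?T x y"
      proof (cases "{x,y} = e")
        case True
        then have "(x = c'!(?m - 1) \<and> y = c'!0) \<or> (x = c'!0 \<and> y = c'!(?m - 1))" using c'(5)
          by (auto simp: doubleton_eq_iff)
        then show ?thesis using r0 reach_sym by metis
      next
        case False then show ?thesis using xy by (intro reach_edge) auto
      qed
    qed
    then show "reach V ?T u v" using p by simp
  qed
  interpret T: cg V ?T by unfold_locales (rule connT)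
  have "card ?T + 1 = card V" using uni eE finE card_Diff_singleton[OF eE]
    by (metis One_nat_def Suc_pred card_gt_0_iff empty_iff add.commute plus_1_eq_Suc)
  then obtain col where col: "\<forall>a b. {a,b} \<in> ?T \<longrightarrow> col a \<noteq> (col b :: bool)" using T.bfs_col by blast
  have bi: "\<And>a b. {a,b} \<in> ?T \<Longrightarrow> col a \<noteq> col b" using col by blast
  have colc: "col (c'!(?m - 1)) = col (c'!0)"
    using walk_col[where col=col and i="?m - 1", OF walkc bi] od c'(2) d(2) by simp
  have dpar: "even (edist_v V E e k) = (col k = col (c'!0))" if k: "k \<in> V" for k
  proof -
    obtain z where z: "z \<in> e" "edist_v V E e k = gdist V E k z" using edist_v_ex[OF eE] by blast
    have zV: "z \<in> V" using z edge_sub[OF eE] by blast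
    obtain p where p: "walk V E p" "hd p = k" "last p = z" "length p = Suc (gdist V E k z)"
      using gdist_ex'[OF k zV] by blast
    have ne: "p \<noteq> []" using p by (simp add: walk_def)
    have wT: "walk V ?T p" unfolding walk_def
    proof (intro conjI allI impI)
      show "p \<noteq> []" "set p \<subseteq> V" using p(1) by (auto simp: walk_def)
      fix i assume i: "Suc i < length p"
      have inE: "{p!i, p!Suc i} \<in> E" using p(1) i by (simp add: walk_def)
      have "{p!i, p!Suc i} \<noteq> e"
      proof
        assume eq: "{p!i, p!Suc i} = e"
        have w1: "walk V E (take (Suc i) p)" using walk_take p(1) by blast
        have "hd (take (Suc i) p) = k" using p ne by (metis hd_take zero_less_Suc)
        moreover have "last (take (Suc i) p) = p!i" using i by (simp add: take_Suc_conv_app_nth)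
        ultimately have "gdist V E k (p!i) \<le> i" using gdist_le[OF w1] i by simp
        moreover have "edist_v V E e k \<le> gdist V E k (p!i)" using edist_v_le[OF eE] eq by blast
        ultimately show False using z(2) p(4) i by simp
      qed
      then show "{p!i, p!Suc i} \<in> ?T" using inE by simp
    qed
    have "(col (p!(length p - 1)) = col (p!0)) = even (length p - 1)"
      using walk_col[where col=col and i="length p - 1", OF wT bi] ne by simp
    moreover have "p!(length p - 1) = z" "p!0 = k" using p ne by (simp_all add: last_conv_nth hd_conv_nth)
    moreover have "col z = col (c'!0)" using z(1) c'(5) colc by auto
    ultimately show ?thesis using z(2) p(4) by auto
  qed
  have abV: "a \<in> V" "b \<in> V" using edge_ab[OF ab(1)] by auto
  have "col a \<noteq> col b" using bi ab by blast
  then show ?thesis using dpar[OF abV(1)] dpar[OF abV(2)] by auto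
qed

end


context cg begin

lemma onpath:
  assumes ei: "ei \<in> E" and ej: "ej \<in> E" and sp: "shortest_path_between V E ei ej p" and x: "x \<in> set p"
  shows "edist_v V E ei x + edist_v V E ej x = edist_e V E ei ej"
proof -
  let ?D = "edist_e V E ei ej"
  have p: "walk V E p" "hd p \<in> ei" "last p \<in> ej" "length p = Suc ?D"
    using sp unfolding shortest_path_between_def by auto
  have ne: "p \<noteq> []" using p by (simp add: walk_def)
  obtain i where i: "i < length p" "x = p!i" using x by (auto simp: in_set_conv_nth)
  have xV: "x \<in> V" using p(1) x by (auto simp: walk_def)
  have hV: "hd p \<in> V" "last p \<in> V" using p(2,3) edge_sub ei ej by blast+
  have w1: "walk V E (take (Suc i) p)" using walk_take p(1) by blast
  have "hd (take (Suc i) p) = hd p" using ne by (metis hd_take zero_less_Suc)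
  moreover have "last (take (Suc i) p) = x" using i by (simp add: take_Suc_conv_app_nth)
  ultimately have "gdist V E (hd p) x \<le> i" using gdist_le[OF w1] i by simp
  then have g1: "gdist V E x (hd p) \<le> i" using gdist_sym[OF xV hV(1)] by simp
  have w2: "walk V E (drop i p)" using walk_drop p(1) i(1) by blast
  have "hd (drop i p) = x" using i by (simp add: hd_drop_conv_nth)
  moreover have "last (drop i p) = last p" using i by simp
  ultimately have g2: "gdist V E x (last p) \<le> length p - i - 1" using gdist_le[OF w2] i by simp
  have u1: "edist_v V E ei x \<le> gdist V E x (hd p)" using edist_v_le[OF ei p(2)] .
  have u2: "edist_v V E ej x \<le> gdist V E x (last p)" using edist_v_le[OF ej p(3)] .
  obtain y where y: "y \<in> ei" "edist_v V E ei x = gdist V E x y" using edist_v_ex[OF ei] by blast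
  obtain z where z: "z \<in> ej" "edist_v V E ej x = gdist V E x z" using edist_v_ex[OF ej] by blast
  have yV: "y \<in> V" "z \<in> V" using y z edge_sub ei ej by blast+
  have "?D \<le> edist_v V E ej y" using edist_e_le[OF ei y(1)] .
  also have "\<dots> \<le> gdist V E y z" using edist_v_le[OF ej z(1)] .
  also have "\<dots> \<le> gdist V E y x + gdist V E x z" using gdist_tri yV xV by blast
  also have "\<dots> = edist_v V E ei x + edist_v V E ej x" using y z gdist_sym[OF xV yV(1)] by simp
  finally show ?thesis using u1 u2 g1 g2 p(4) i(1) by linarith
qed

lemma sp_exists:
  assumes ei: "ei \<in> E" and ej: "ej \<in> E"
  shows "\<exists>p. shortest_path_between V E ei ej p"
proof -
  obtain x0 where x0: "x0 \<in> ei" "edist_e V E ei ej = edist_v V E ej x0" using edist_e_ex[OF ei] by blast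
  obtain z0 where z0: "z0 \<in> ej" "edist_v V E ej x0 = gdist V E x0 z0" using edist_v_ex[OF ej] by blast
  have V: "x0 \<in> V" "z0 \<in> V" using x0 z0 edge_sub ei ej by blast+
  obtain p where "walk V E p" "hd p = x0" "last p = z0" "length p = Suc (gdist V E x0 z0)"
    using gdist_ex'[OF V] by blast
  then show ?thesis unfolding shortest_path_between_def using x0 z0 by (intro exI[of _ p]) auto
qed

lemma partAB:
  assumes uni: "card E = card V" and d: "distinct c" "length c \<ge> 3" "set c \<subseteq> V" "cycle_edges c \<subseteq> E"
    and od: "odd (length c)" and ei: "ei \<in> cycle_edges c" and ej: "ej \<in> cycle_edges c" and ne: "ei \<noteq> ej"
    and k: "k \<in> V"
  shows "(k \<in> comp_with_path V E ei ej \<longrightarrow>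
        (edist_v V E ei k + edist_v V E ej k) mod 2 = edist_e V E ei ej mod 2)
   \<and> (k \<notin> comp_with_path V E ei ej \<longrightarrow>
        (edist_v V E ei k + edist_v V E ej k) mod 2 \<noteq> edist_e V E ei ej mod 2)"
proof -
  let ?D = "edist_e V E ei ej"
  define pr where "pr x = (edist_v V E ei x + edist_v V E ej x) mod 2" for x
  let ?F = "E - {ei, ej}"
  have eiE: "ei \<in> E" and ejE: "ej \<in> E" using ei ej d(4) by auto
  have keyi: "\<And>a b. {a,b} \<in> E \<Longrightarrow> {a,b} \<noteq> ei \<Longrightarrow> odd (edist_v V E ei a + edist_v V E ei b)"
    using key[OF uni d od ei] by blast
  have keyj: "\<And>a b. {a,b} \<in> E \<Longrightarrow> {a,b} \<noteq> ej \<Longrightarrow> odd (edist_v V E ej a + edist_v V E ej b)"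
    using key[OF uni d od ej] by blast
  have parF: "pr a = pr b" if r: "reach V ?F a b" for a b
  proof -
    obtain p where p: "walk V ?F p" "hd p = a" "last p = b" using r unfolding reach_def by blast
    have "pr (hd p) = pr (last p)"
    proof (rule walk_induct_rel[OF p(1)])
      fix x y assume "{x,y} \<in> ?F"
      then have "odd (edist_v V E ei x + edist_v V E ei y)" "odd (edist_v V E ej x + edist_v V E ej y)"
        using keyi keyj by auto
      then show "pr x = pr y" unfolding pr_def by presburger
    qed auto
    then show ?thesis using p by simp
  qed
  have partA: "pr x = ?D mod 2" if sp: "shortest_path_between V E ei ej p" and x: "x \<in> set p" for p x
    using onpath[OF eiE ejE sp x] unfolding pr_def by simp
  have A: "k \<in> comp_with_path V E ei ej \<Longrightarrow> pr k = ?D mod 2"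
  proof -
    assume "k \<in> comp_with_path V E ei ej"
    then obtain p x where "shortest_path_between V E ei ej p" "x \<in> set p" "reach V ?F x k"
      unfolding comp_with_path_def by blast
    then show ?thesis using partA parF by metis
  qed
  have B: "k \<notin> comp_with_path V E ei ej \<Longrightarrow> pr k \<noteq> ?D mod 2"
  proof
    assume nk: "k \<notin> comp_with_path V E ei ej" and pk: "pr k = ?D mod 2"
    obtain p0 where p0: "shortest_path_between V E ei ej p0" using sp_exists[OF eiE ejE] by blast
    let ?x0 = "hd p0"
    have x0: "?x0 \<in> ei" "?x0 \<in> set p0" using p0 unfolding shortest_path_between_def walk_def by auto
    have px0: "pr ?x0 = ?D mod 2" using partA[OF p0 x0(2)] .
    have K1: "reach V ?F ?x0 k \<Longrightarrow> False"
      using nk p0 x0(2) k unfolding comp_with_path_def by blast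
    let ?m = "length c"
    obtain c' where c': "distinct c'" "length c' = ?m" "set c' = set c" "cycle_edges c' = cycle_edges c"
       "ei = {c'!(?m - 1), c'!0}" using cycle_rotate[OF d(1,2) ei] by blast
    have d': "distinct c'" "length c' \<ge> 3" using c' d by auto
    have m3: "?m \<ge> 3" using d by simp
    have "ej \<in> cycle_edges c'" using ej c'(4) by simp
    then obtain j0 where "j0 < length c'" "ej = {c'!j0, c'!(Suc j0 mod length c')}"
      unfolding cycle_edges_def by blast
    then obtain j where j: "j < ?m" "ej = {c'!j, c'!(Suc j mod ?m)}" using c'(2) by auto
    have jm: "Suc j < ?m"
    proof (rule ccontr)
      assume "\<not> Suc j < ?m"
      then have "j = ?m - 1" using j by simp
      then have "Suc j = ?m" using m3 by linarith
      then have "Suc j mod ?m = 0" by simp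
      then have "ej = ei" using j c'(5) \<open>j = ?m - 1\<close> by simp
      then show False using ne by simp
    qed
    have ejj: "ej = {c'!j, c'!Suc j}" using j jm by simp
    have cV: "\<And>l. l < ?m \<Longrightarrow> c'!l \<in> V" using c'(2,3) d(3) nth_mem by (metis subsetD)
    have edgeF: "{c'!l, c'!Suc l} \<in> ?F" if l: "Suc l < ?m" "l \<noteq> j" for l
    proof -
      have l': "Suc l < length c'" using l c'(2) by simp
      have "{c'!l, c'!Suc l} \<in> E" using last_edge_ne(1)[OF d' l'] c'(4) d(4) by auto
      moreover have "{c'!l, c'!Suc l} \<noteq> ei" using last_edge_ne(2)[OF d' l'] c'(2,5) by simp
      moreover have "{c'!l, c'!Suc l} \<noteq> ej"
      proof
        assume "{c'!l, c'!Suc l} = ej"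
        then have "{c'!l, c'!(Suc l mod length c')} = {c'!j, c'!(Suc j mod length c')}"
          using ejj l jm c'(2) by simp
        then have "l = j" using ce_inj[OF d'] l jm c'(2) by simp
        then show False using l by simp
      qed
      ultimately show ?thesis by simp
    qed
    have arc1: "l \<le> j \<Longrightarrow> reach V ?F (c'!0) (c'!l)" for l
    proof (induction l)
      case 0
      have "0 < ?m" using m3 by linarith
      then have "c'!0 \<in> V" by (rule cV)
      then show ?case by (simp add: reach_refl)
    next
      case (Suc l)
      then have "reach V ?F (c'!0) (c'!l)" by simp
      moreover have "{c'!l, c'!Suc l} \<in> ?F" using edgeF Suc jm by simp
      then have "reach V ?F (c'!l) (c'!Suc l)" using cV Suc jm by (intro reach_edge) auto
      ultimately show ?case using reach_trans by metis
    qed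
    have arc2: "Suc j + t < ?m \<Longrightarrow> reach V ?F (c'!Suc j) (c'!(Suc j + t))" for t
    proof (induction t)
      case 0
      have "c'!Suc j \<in> V" using jm by (rule cV)
      then show ?case by (simp add: reach_refl)
    next
      case (Suc t)
      then have "reach V ?F (c'!Suc j) (c'!(Suc j + t))" by simp
      moreover have "{c'!(Suc j + t), c'!Suc (Suc j + t)} \<in> ?F" using edgeF Suc by simp
      then have "reach V ?F (c'!(Suc j + t)) (c'!Suc (Suc j + t))" using cV Suc by (intro reach_edge) auto
      ultimately show ?case using reach_trans by (metis add_Suc_right)
    qed
    have arc2': "reach V ?F (c'!(?m - 1)) (c'!l)" if l: "j < l" "l < ?m" for l
    proof -
      have r1: "reach V ?F (c'!Suc j) (c'!l)" using arc2[of "l - Suc j"] l by simp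
      have eq: "Suc j + (?m - 1 - Suc j) = ?m - 1" using jm by simp
      have "Suc j + (?m - 1 - Suc j) < ?m" using eq m3 by linarith
      then have "reach V ?F (c'!Suc j) (c'!(Suc j + (?m - 1 - Suc j)))" by (rule arc2)
      then have "reach V ?F (c'!Suc j) (c'!(?m - 1))" by (simp only: eq)
      then show ?thesis using r1 reach_sym reach_trans by metis
    qed
    have p0m: "pr (c'!0) \<noteq> pr (c'!(?m - 1))"
    proof -
      have z: "edist_v V E ei (c'!0) = 0" "edist_v V E ei (c'!(?m - 1)) = 0"
        using edist_v_zero[OF eiE] c'(5) by auto
      have "odd (edist_v V E ej (c'!(?m - 1)) + edist_v V E ej (c'!0))"
        using keyj[of "c'!(?m - 1)" "c'!0"] eiE c'(5) ne by simp
      then show ?thesis unfolding pr_def using z by presburger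
    qed
    have "0 < ?m" using m3 by linarith
    then have "c'!0 \<in> V" by (rule cV)
    then obtain q where q: "walk V E q" "hd q = k" "last q = c'!0" using reach_all[OF k]
      unfolding reach_def by blast
    have qne: "q \<noteq> []" using q by (simp add: walk_def)
    define P where "P i = (i < length q \<and> q!i \<in> set c')" for i
    have "c'!0 \<in> set c'" using \<open>0 < ?m\<close> c'(2) by (metis nth_mem)
    then have "P (length q - 1)" unfolding P_def using q qne by (simp add: last_conv_nth)
    then have Pi: "P (LEAST i. P i)" by (rule LeastI)
    define i0 where "i0 = (LEAST i. P i)"
    have before: "t < i0 \<Longrightarrow> q!t \<notin> set c'" for t
      using not_less_Least[of t P] unfolding i0_def P_def using Pi unfolding P_def by auto
    have i0: "i0 < length q" "q!i0 \<in> set c'" using Pi unfolding P_def i0_def by auto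
    have "c'!(?m - 1) \<in> set c'" "c'!j \<in> set c'" "c'!Suc j \<in> set c'"
      using \<open>0 < ?m\<close> c'(2) jm by (metis nth_mem diff_less zero_less_one, metis nth_mem Suc_lessD, metis nth_mem)
    then have eis: "ei \<subseteq> set c'" "ej \<subseteq> set c'" using c'(5) ejj \<open>c'!0 \<in> set c'\<close> by auto
    have wq: "walk V ?F (take (Suc i0) q)" unfolding walk_def
    proof (intro conjI allI impI)
      show "take (Suc i0) q \<noteq> []" using qne by simp
      show "set (take (Suc i0) q) \<subseteq> V" using q(1) set_take_subset[of "Suc i0" q] by (auto simp: walk_def)
      fix t assume t: "Suc t < length (take (Suc i0) q)"
      then have t': "Suc t < length q" "t < i0" by auto
      have "{q!t, q!Suc t} \<in> E" using q(1) t' by (simp add: walk_def)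
      moreover have "q!t \<notin> set c'" using before t' by simp
      then have "{q!t, q!Suc t} \<noteq> ei" "{q!t, q!Suc t} \<noteq> ej" using eis by auto
      ultimately show "{take (Suc i0) q ! t, take (Suc i0) q ! Suc t} \<in> ?F" using t' by simp
    qed
    have "hd (take (Suc i0) q) = k" using q qne by (metis hd_take zero_less_Suc)
    moreover have "last (take (Suc i0) q) = q!i0" using i0 by (simp add: take_Suc_conv_app_nth)
    ultimately have rk: "reach V ?F k (q!i0)" using wq unfolding reach_def by blast
    obtain l where l: "l < ?m" "q!i0 = c'!l" using i0(2) c'(2) by (auto simp: in_set_conv_nth)
    have pkl: "pr (c'!l) = ?D mod 2" using parF[OF rk] l pk by simp
    have x0c: "?x0 = c'!(?m - 1) \<or> ?x0 = c'!0" using x0(1) c'(5) by auto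
    show False
    proof (cases "l \<le> j")
      case True
      have r: "reach V ?F (c'!0) (c'!l)" using arc1[OF True] .
      show False using x0c
      proof
        assume "?x0 = c'!(?m - 1)"
        then show False using p0m parF[OF r] pkl px0 by simp
      next
        assume "?x0 = c'!0"
        then show False using K1 r rk l reach_sym reach_trans by metis
      qed
    next
      case False
      have r: "reach V ?F (c'!(?m - 1)) (c'!l)" using arc2' False l by simp
      show False using x0c
      proof
        assume "?x0 = c'!0"
        then show False using p0m parF[OF r] pkl px0 by simp
      next
        assume "?x0 = c'!(?m - 1)"
        then show False using K1 r rk l reach_sym reach_trans by metis
      qed
    qed
  qed
  show ?thesis using A B unfolding pr_def by blast
qed

end


theorem mainTheorem12:
  fixes V :: "'a set" and E C :: "'a set set" and ei ej :: "'a set" and k :: 'a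
  assumes "unicyclic V E"
    and "is_cycle V E C"
    and "odd (card C)"
    and "ei \<in> E" and "ej \<in> E" and "ei \<noteq> ej"
    and "k \<in> V"
  shows
    "(ei \<in> C \<and> ej \<in> C \<and> k \<in> comp_with_path V E ei ej \<longrightarrow>
        (edist_v V E ei k + edist_v V E ej k) mod 2 = edist_e V E ei ej mod 2)
   \<and> (ei \<in> C \<and> ej \<in> C \<and> k \<notin> comp_with_path V E ei ej \<longrightarrow>
        (edist_v V E ei k + edist_v V E ej k) mod 2 \<noteq> edist_e V E ei ej mod 2)
   \<and> (ei \<notin> C \<and> ej \<notin> C \<and> k \<in> comp_without_cycle V E C ei \<inter> comp_without_cycle V E C ej \<longrightarrow>
        (edist_v V E ei k + edist_v V E ej k) mod 2 \<noteq> edist_e V E ei ej mod 2)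
   \<and> (ei \<in> C \<and> ej \<notin> C \<and> k \<notin> comp_with_cycle V E C ej \<longrightarrow>
        (edist_v V E ei k + edist_v V E ej k) mod 2 \<noteq> edist_e V E ei ej mod 2)"
proof -
  have conn: "connected_graph V E" and uni: "card E = card V" using assms(1) unfolding unicyclic_def by auto
  interpret cg V E by unfold_locales (rule conn)
  obtain c where c: "distinct c" "length c \<ge> 3" "set c \<subseteq> V" "cycle_edges c \<subseteq> E" "C = cycle_edges c"
    using assms(2) unfolding is_cycle_def by blast
  have od: "odd (length c)" using assms(3) card_ce[OF c(1,2)] c(5) by simp
  have CE: "C \<subseteq> E" using c by simp
  have CV: "\<Union>C \<subseteq> V" using CE edge_sub by blast
  have "C \<noteq> {}" using card_ce[OF c(1,2)] c(2,5) by auto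
  then obtain e0 where e0: "e0 \<in> C" by blast
  then have "e0 \<noteq> {}" using CE edge_ne by blast
  then have CN: "\<Union>C \<noteq> {}" using e0 by blast
  have P12: "(ei \<in> C \<and> ej \<in> C \<and> k \<in> comp_with_path V E ei ej \<longrightarrow>
        (edist_v V E ei k + edist_v V E ej k) mod 2 = edist_e V E ei ej mod 2)
   \<and> (ei \<in> C \<and> ej \<in> C \<and> k \<notin> comp_with_path V E ei ej \<longrightarrow>
        (edist_v V E ei k + edist_v V E ej k) mod 2 \<noteq> edist_e V E ei ej mod 2)"
  proof (cases "ei \<in> C \<and> ej \<in> C")
    case True
    then show ?thesis using partAB[OF uni c(1-4) od _ _ assms(6,7)] c(5) by blast
  qed blast
  have P3: "ei \<notin> C \<and> ej \<notin> C \<and> k \<in> comp_without_cycle V E C ei \<inter> comp_without_cycle V E C ej \<longrightarrow>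
        (edist_v V E ei k + edist_v V E ej k) mod 2 \<noteq> edist_e V E ei ej mod 2"
    using partC[OF CV CN assms(4,5,6,7)] unfolding comp_without_cycle_def by blast
  have P4: "ei \<in> C \<and> ej \<notin> C \<and> k \<notin> comp_with_cycle V E C ej \<longrightarrow>
        (edist_v V E ei k + edist_v V E ej k) mod 2 \<noteq> edist_e V E ei ej mod 2"
    using partD[OF CV CN _ assms(4,5,7)] by blast
  show ?thesis using P12 P3 P4 by blast
qed


end
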